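(* Let $C=(V_c,E_c)$ be a cactus graph and let $C_L=(V_c,L_c)$ be a link graph on the same vertex set, where $L_c\subseteq\binom{V_c}{2}$, $L_c\cap E_c=\emptyset$, and each link $l\in L_c$ has a cost $c(l)\in\mathbb{R}_{\ge 0}$. Suppose a feasible solution to the weighted connectivity augmentation problem (WCAP) on $C$ with link set $L_c$ exists. Then every minimum spanning forest $L_{MST}\subseteq L_c$ of $C_L$ (with respect to the costs $c$) is a feasible solution to the WCAP on $C$.
   Context: A cactus graph is a connected graph in which any two cycles have at most one vertex in common; it may carry positive edge weights. A cut of a graph is a bipartition of its vertex set into two non-empty parts; its weight is the total weight of edges with one endpoint in each part, and a minimum cut is a cut of minimum weight. A link $l=uv$ covers a cut if $u$ and $v$ lie on different sides of it (equivalently, adding $l$ to the graph increases the weight of that cut). For the WCAP on $C$ with link set $L_c$, a set $S\subseteq L_c$ is a feasible solution (an augmentation) if adding the links of $S$ to $C$ increases its edge connectivity, i.e. every minimum cut of $C$ is covered by at least one link of $S$. A minimum spanning forest of $C_L$ is a minimum-cost subset of $L_c$ forming a spanning tree of each connected component of $C_L$. *)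

theory Defs
  imports Complex_Main
begin

definition graph :: "'a set \<Rightarrow> 'a set set \<Rightarrow> bool" where
  "graph V E \<longleftrightarrow> finite V \<and> (\<forall>e\<in>E. \<exists>u v. e = {u, v} \<and> u \<noteq> v \<and> u \<in> V \<and> v \<in> V)"

definition reach :: "'a set \<Rightarrow> 'a set set \<Rightarrow> 'a \<Rightarrow> 'a \<Rightarrow> bool" where
  "reach V E u v \<longleftrightarrow> (u, v) \<in> {(x, y). x \<in> V \<and> y \<in> V \<and> {x, y} \<in> E}\<^sup>*"

definition connected_graph :: "'a set \<Rightarrow> 'a set set \<Rightarrow> bool" where
  "connected_graph V E \<longleftrightarrow> V \<noteq> {} \<and> (\<forall>u\<in>V. \<forall>v\<in>V. reach V E u v)"

definition is_cycle :: "'a set set \<Rightarrow> 'a list \<Rightarrow> bool" where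
  "is_cycle E xs \<longleftrightarrow> length xs \<ge> 3 \<and> distinct xs \<and>
     (\<forall>i < length xs. {xs ! i, xs ! ((i + 1) mod length xs)} \<in> E)"

definition cycle_edges :: "'a list \<Rightarrow> 'a set set" where
  "cycle_edges xs = {{xs ! i, xs ! ((i + 1) mod length xs)} | i. i < length xs}"

definition cactus :: "'a set \<Rightarrow> 'a set set \<Rightarrow> bool" where
  "cactus V E \<longleftrightarrow> graph V E \<and> connected_graph V E \<and>
     (\<forall>xs ys. is_cycle E xs \<and> is_cycle E ys \<and> cycle_edges xs \<noteq> cycle_edges ys
        \<longrightarrow> card (set xs \<inter> set ys) \<le> 1)"

text \<open>A cut is represented by one side X of the bipartition (X, V - X).\<close>

definition is_cut :: "'a set \<Rightarrow> 'a set \<Rightarrow> bool" where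
  "is_cut V X \<longleftrightarrow> X \<subseteq> V \<and> X \<noteq> {} \<and> X \<noteq> V"

definition crosses :: "'a set \<Rightarrow> 'a set \<Rightarrow> 'a set \<Rightarrow> bool" where
  "crosses V X e \<longleftrightarrow> (\<exists>u v. e = {u, v} \<and> u \<in> X \<and> v \<in> V - X)"

definition cut_weight :: "'a set \<Rightarrow> 'a set set \<Rightarrow> ('a set \<Rightarrow> real) \<Rightarrow> 'a set \<Rightarrow> real" where
  "cut_weight V E w X = (\<Sum>e \<in> {e \<in> E. crosses V X e}. w e)"

definition min_cut :: "'a set \<Rightarrow> 'a set set \<Rightarrow> ('a set \<Rightarrow> real) \<Rightarrow> 'a set \<Rightarrow> bool" where
  "min_cut V E w X \<longleftrightarrow> is_cut V X \<and>
     (\<forall>Y. is_cut V Y \<longrightarrow> cut_weight V E w X \<le> cut_weight V E w Y)"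

text \<open>A link l covers the cut X iff its endpoints lie on different sides.\<close>

definition wcap_feasible ::
  "'a set \<Rightarrow> 'a set set \<Rightarrow> ('a set \<Rightarrow> real) \<Rightarrow> 'a set set \<Rightarrow> 'a set set \<Rightarrow> bool" where
  "wcap_feasible V E w L S \<longleftrightarrow> S \<subseteq> L \<and>
     (\<forall>X. min_cut V E w X \<longrightarrow> (\<exists>l\<in>S. crosses V X l))"

definition forest :: "'a set set \<Rightarrow> bool" where
  "forest F \<longleftrightarrow> \<not> (\<exists>xs. is_cycle F xs)"

definition spanning_forest :: "'a set \<Rightarrow> 'a set set \<Rightarrow> 'a set set \<Rightarrow> bool" where
  "spanning_forest V L F \<longleftrightarrow> F \<subseteq> L \<and> forest F \<and>
     (\<forall>u\<in>V. \<forall>v\<in>V. reach V L u v \<longleftrightarrow> reach V F u v)"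

definition min_spanning_forest ::
  "'a set \<Rightarrow> 'a set set \<Rightarrow> ('a set \<Rightarrow> real) \<Rightarrow> 'a set set \<Rightarrow> bool" where
  "min_spanning_forest V L c F \<longleftrightarrow> spanning_forest V L F \<and>
     (\<forall>F'. spanning_forest V L F' \<longrightarrow> sum c F \<le> sum c F')"

end

theory Submission
  imports Defs
begin

lemma reach_cross:
  assumes "reach V F u v" "u \<in> X" "v \<notin> X"
  shows "\<exists>e\<in>F. crosses V X e"
proof -
  have r: "(u, v) \<in> {(x, y). x \<in> V \<and> y \<in> V \<and> {x, y} \<in> F}\<^sup>*"
    using assms(1) unfolding reach_def by simp
  have "v \<in> X \<or> (\<exists>e\<in>F. crosses V X e)"
    using r
  proof (induction rule: rtrancl_induct)
    case base
    then show ?case using assms(2) by simp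
  next
    case (step y z)
    show ?case
    proof (cases "z \<in> X")
      case True then show ?thesis by simp
    next
      case False
      with step have "y \<in> X \<or> (\<exists>e\<in>F. crosses V X e)" by simp
      then show ?thesis
      proof
        assume "y \<in> X"
        then have "crosses V X {y, z}" using False step(2) unfolding crosses_def by blast
        then show ?thesis using step(2) by blast
      qed simp
    qed
  qed
  then show ?thesis using assms(3) by simp
qed

theorem theorem2:
  fixes V :: "'a set" and E L F :: "'a set set"
    and w c :: "'a set \<Rightarrow> real"
  assumes "cactus V E"
    and "\<forall>e\<in>E. w e > 0"
    and "graph V L"
    and "L \<inter> E = {}"
    and "\<forall>l\<in>L. c l \<ge> 0"
    and "\<exists>S. wcap_feasible V E w L S"
    and "min_spanning_forest V L c F"
  shows "wcap_feasible V E w L F"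
proof -
  obtain S where S: "wcap_feasible V E w L S" using assms(6) by blast
  have sf: "spanning_forest V L F" using assms(7) unfolding min_spanning_forest_def by simp
  have FL: "F \<subseteq> L" and re: "\<forall>u\<in>V. \<forall>v\<in>V. reach V L u v \<longleftrightarrow> reach V F u v"
    using sf unfolding spanning_forest_def by auto
  have "\<exists>l\<in>F. crosses V X l" if mc: "min_cut V E w X" for X
  proof -
    have XV: "X \<subseteq> V" using mc unfolding min_cut_def is_cut_def by simp
    obtain l where l: "l \<in> S" "crosses V X l" using S mc unfolding wcap_feasible_def by blast
    then obtain u v where uv: "l = {u, v}" "u \<in> X" "v \<in> V - X" unfolding crosses_def by blast
    have "l \<in> L" using l S unfolding wcap_feasible_def by blast
    then have "reach V L u v" using uv XV unfolding reach_def by auto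
    then have "reach V F u v" using re uv XV by auto
    then show ?thesis using reach_cross uv by fastforce
  qed
  then show ?thesis using FL unfolding wcap_feasible_def by blast
qed

end
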